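(* For all integers $L,M\ge 0$, $$\sum_{i,j\in\mathbb Z}(-1)^{i+j}q^{\binom{i+j}{2}}\begin{bmatrix}2L\\ L-i\end{bmatrix}_{q^2}\begin{bmatrix}2M\\ M-j\end{bmatrix}_{q^2}=(-1)^{L+M}q^{(L-M)^2}(q;q^2)_{L+M}.$$
   Context: $q$ is complex with $|q|<1$. $(a;q)_n=\prod_{j=0}^{n-1}(1-aq^j)$ for $n\ge0$; $(q)_n=(q;q)_n$. The Gaussian binomial is $\begin{bmatrix}n+m\\ n\end{bmatrix}_q=\frac{(q)_{n+m}}{(q)_n(q)_m}$ if $n,m$ are nonnegative integers and $0$ otherwise. $\binom{x}{2}=x(x-1)/2$. *)

theory Defs
  imports "HOL-Analysis.Analysis"
begin

definition qpoch :: "complex \<Rightarrow> complex \<Rightarrow> nat \<Rightarrow> complex" where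
  "qpoch a q n = (\<Prod>j<n. 1 - a * q ^ j)"

definition gauss_binom :: "complex \<Rightarrow> int \<Rightarrow> int \<Rightarrow> complex" where
  "gauss_binom q N K =
     (if 0 \<le> K \<and> K \<le> N
      then qpoch q q (nat N) / (qpoch q q (nat K) * qpoch q q (nat (N - K)))
      else 0)"

(* binom(x,2) = x(x-1)/2 for integer x; always a nonnegative integer *)
definition binom2 :: "int \<Rightarrow> int" where
  "binom2 x = x * (x - 1) div 2"

end

theory Submission imports Defs begin

lemma qpoch_Suc: "qpoch a q (Suc n) = qpoch a q n * (1 - a * q ^ n)"
  by (simp add: qpoch_def)

lemma qpoch_0[simp]: "qpoch a q 0 = 1"
  by (simp add: qpoch_def)

lemma gb_mid: "0 \<le> k \<Longrightarrow> k \<le> int n \<Longrightarrow>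
  gauss_binom p (int n) k = qpoch p p n / (qpoch p p (nat k) * qpoch p p (n - nat k))"
  unfolding gauss_binom_def by (simp add: nat_diff_distrib)

lemma gb_out: "k < 0 \<or> k > int n \<Longrightarrow> gauss_binom p (int n) k = 0"
  unfolding gauss_binom_def by auto

lemma gb_0: "qpoch p p n \<noteq> 0 \<Longrightarrow> gauss_binom p (int n) 0 = 1"
  unfolding gauss_binom_def by simp

lemma gb_n: "qpoch p p n \<noteq> 0 \<Longrightarrow> gauss_binom p (int n) (int n) = 1"
  unfolding gauss_binom_def by simp

lemma gb_sym: "gauss_binom p (int n) (int n - k) = gauss_binom p (int n) k"
  unfolding gauss_binom_def by (auto simp: mult.commute)

lemma P1:
  assumes nz: "\<And>m. qpoch p p m \<noteq> 0"
  shows "gauss_binom p (int (Suc n)) k = gauss_binom p (int n) (k-1) + p^nat k * gauss_binom p (int n) k"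
proof -
  consider "k < 0" | "k = 0" | "k = int n + 1" | "k > int n + 1" | "1 \<le> k \<and> k \<le> int n" by linarith
  then show ?thesis
  proof cases
    case 1 then show ?thesis using gb_out[of k "Suc n" p] by (simp add: gb_out del: of_nat_Suc)
  next
    case 2 then show ?thesis using nz by (simp add: gb_out gb_0 del: of_nat_Suc)
  next
    case 3 then show ?thesis using nz gb_n[of p "Suc n"] gb_n[of p n] by (simp add: gb_out add.commute)
  next
    case 4 then show ?thesis using gb_out[of k "Suc n" p] by (simp add: gb_out del: of_nat_Suc)
  next
    case 5
    define j where "j = nat k - 1"
    define r where "r = n - nat k"
    have k: "k = int (Suc j)" using 5 unfolding j_def by simp
    have "nat k \<le> n" using 5 by (simp add: nat_le_iff)
    hence n: "n = Suc j + r" using 5 unfolding j_def r_def by simp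
    have nk: "nat k = Suc j" "nat (k-1) = j" using 5 unfolding j_def by auto
    have a: "gauss_binom p (int (Suc n)) k = qpoch p p (Suc (Suc (j + r))) / (qpoch p p (Suc j) * qpoch p p (Suc r))"
      by (subst gb_mid) (use 5 in \<open>auto simp: nk n\<close>)
    have b: "gauss_binom p (int n) (k-1) = qpoch p p (Suc (j + r)) / (qpoch p p j * qpoch p p (Suc r))"
      by (subst gb_mid) (use 5 in \<open>auto simp: nk n\<close>)
    have c: "gauss_binom p (int n) k = qpoch p p (Suc (j + r)) / (qpoch p p (Suc j) * qpoch p p r)"
      by (subst gb_mid) (use 5 in \<open>auto simp: nk n\<close>)
    have nzj: "qpoch p p j \<noteq> 0" "qpoch p p r \<noteq> 0" "qpoch p p (j+r) \<noteq> 0" using nz by auto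
    have f1: "1 - p * p ^ j \<noteq> 0" using nz[of "Suc j"] by (simp add: qpoch_Suc)
    have f2: "1 - p * p ^ r \<noteq> 0" using nz[of "Suc r"] by (simp add: qpoch_Suc)
    have alg: "\<And>A B C x y::complex. A \<noteq> 0 \<Longrightarrow> B \<noteq> 0 \<Longrightarrow> 1 - p*x \<noteq> 0 \<Longrightarrow> 1 - p*y \<noteq> 0 \<Longrightarrow>
       C * (1 - p*(x*y)) * (1 - p*(p*(x*y))) / (A*(1-p*x) * (B*(1-p*y))) =
       C * (1 - p*(x*y)) / (A * (B*(1-p*y))) + p*x * (C * (1 - p*(x*y)) / (A*(1-p*x)*B))"
      by (simp add: divide_simps; simp add: algebra_simps)
    show ?thesis unfolding a b c using nzj f1 f2
      by (simp add: qpoch_Suc nk power_add divide_simps; simp add: algebra_simps)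
  qed
qed

lemma I1:
  assumes nz: "\<And>m. qpoch p p m \<noteq> 0"
  shows "(1 - p^nat k) * gauss_binom p (int (Suc n)) k = (1 - p^Suc n) * gauss_binom p (int n) (k-1)"
proof -
  consider "k < 0" | "k = 0" | "k > int n + 1" | "1 \<le> k \<and> k \<le> int n + 1" by linarith
  then show ?thesis
  proof cases
    case 1 then show ?thesis using gb_out[of k "Suc n" p] by (simp add: gb_out del: of_nat_Suc)
  next
    case 2 then show ?thesis by (simp add: gb_out)
  next
    case 3 then show ?thesis using gb_out[of k "Suc n" p] by (simp add: gb_out del: of_nat_Suc)
  next
    case 4
    define j where "j = nat k - 1"
    define r where "r = Suc n - nat k"
    have "nat k \<le> Suc n" "1 \<le> nat k" using 4 by (simp_all add: nat_le_iff le_nat_iff)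
    hence n: "n = j + r" unfolding j_def r_def by linarith
    have nk: "nat k = Suc j" "nat (k-1) = j" using 4 unfolding j_def by auto
    have a: "gauss_binom p (int (Suc n)) k = qpoch p p (Suc (j + r)) / (qpoch p p (Suc j) * qpoch p p r)"
      by (subst gb_mid) (use 4 in \<open>auto simp: nk n\<close>)
    have b: "gauss_binom p (int n) (k-1) = qpoch p p (j + r) / (qpoch p p j * qpoch p p r)"
      by (subst gb_mid) (use 4 in \<open>auto simp: nk n\<close>)
    have nzj: "qpoch p p j \<noteq> 0" "qpoch p p r \<noteq> 0" using nz by auto
    have f1: "1 - p * p ^ j \<noteq> 0" using nz[of "Suc j"] by (simp add: qpoch_Suc)
    show ?thesis unfolding a b using nzj f1
      by (simp add: qpoch_Suc nk n power_add divide_simps; simp add: algebra_simps)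
  qed
qed

lemma P2:
  assumes nz: "\<And>m. qpoch p p m \<noteq> 0"
  shows "gauss_binom p (int (Suc n)) k = gauss_binom p (int n) k + p^nat (int n + 1 - k) * gauss_binom p (int n) (k-1)"
proof -
  consider "k < 0" | "k = 0" | "k = int n + 1" | "k > int n + 1" | "1 \<le> k \<and> k \<le> int n" by linarith
  then show ?thesis
  proof cases
    case 1 then show ?thesis using gb_out[of k "Suc n" p] by (simp add: gb_out del: of_nat_Suc)
  next
    case 2 then show ?thesis using nz by (simp add: gb_out gb_0 del: of_nat_Suc)
  next
    case 3 then show ?thesis using nz gb_n[of p "Suc n"] gb_n[of p n] by (simp add: gb_out add.commute)
  next
    case 4 then show ?thesis using gb_out[of k "Suc n" p] by (simp add: gb_out del: of_nat_Suc)
  next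
    case 5
    define j where "j = nat k - 1"
    define r where "r = n - nat k"
    have "nat k \<le> n" using 5 by (simp add: nat_le_iff)
    hence n: "n = Suc j + r" using 5 unfolding j_def r_def by simp
    have nk: "nat k = Suc j" "nat (k-1) = j" "nat (int n + 1 - k) = Suc r" using 5 \<open>nat k \<le> n\<close> unfolding j_def r_def by auto
    have a: "gauss_binom p (int (Suc n)) k = qpoch p p (Suc (Suc (j + r))) / (qpoch p p (Suc j) * qpoch p p (Suc r))"
      by (subst gb_mid) (use 5 in \<open>auto simp: nk n\<close>)
    have b: "gauss_binom p (int n) (k-1) = qpoch p p (Suc (j + r)) / (qpoch p p j * qpoch p p (Suc r))"
      by (subst gb_mid) (use 5 in \<open>auto simp: nk n\<close>)
    have c: "gauss_binom p (int n) k = qpoch p p (Suc (j + r)) / (qpoch p p (Suc j) * qpoch p p r)"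
      by (subst gb_mid) (use 5 in \<open>auto simp: nk n\<close>)
    have nzj: "qpoch p p j \<noteq> 0" "qpoch p p r \<noteq> 0" using nz by auto
    have f1: "1 - p * p ^ j \<noteq> 0" using nz[of "Suc j"] by (simp add: qpoch_Suc)
    have f2: "1 - p * p ^ r \<noteq> 0" using nz[of "Suc r"] by (simp add: qpoch_Suc)
    show ?thesis unfolding a b c using nzj f1 f2
      by (simp add: qpoch_Suc nk power_add divide_simps; simp add: algebra_simps)
  qed
qed

lemma qpoch_nz:
  fixes q :: complex assumes "norm q < 1" shows "qpoch (q^2) (q^2) m \<noteq> 0"
proof -
  have "1 - q^2 * (q^2)^j \<noteq> 0" for j
  proof
    assume "1 - q^2 * (q^2)^j = 0"
    hence "(q:: complex) ^ (2 + 2*j) = 1" by (metis power_add power_mult right_minus_eq)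
    hence "norm ((q:: complex) ^ (2 + 2*j)) = 1" by simp
    moreover have "norm (q ^ (2 + 2*j)) < 1" using assms
      unfolding norm_power by (subst power_less_one_iff) auto
    ultimately show False by simp
  qed
  thus ?thesis unfolding qpoch_def by (simp add: prod_zero_iff)
qed


definition Q :: "complex \<Rightarrow> int \<Rightarrow> complex" where "Q q x = q ^ nat (binom2 x)"
definition gbn :: "complex \<Rightarrow> nat \<Rightarrow> int \<Rightarrow> complex" where "gbn q n k = gauss_binom (q^2) (int n) k"
definition SG :: "complex \<Rightarrow> nat \<Rightarrow> (nat \<Rightarrow> complex) \<Rightarrow> complex" where
  "SG q n \<phi> = (\<Sum>k\<le>n. gbn q n (int k) * \<phi> k)"
definition E :: "complex \<Rightarrow> nat \<Rightarrow> int \<Rightarrow> complex" where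
  "E q n a = SG q n (\<lambda>k. (-1)^k * Q q (a - int k))"
definition D :: "complex \<Rightarrow> nat \<Rightarrow> nat \<Rightarrow> int \<Rightarrow> complex" where
  "D q N1 N2 a = SG q N1 (\<lambda>k. (-1)^k * E q N2 (a - int k))"

lemma binom2_2: "2 * binom2 x = x * (x - 1)"
proof -
  have "even (x * (x - 1))" by auto
  thus ?thesis unfolding binom2_def by (rule dvd_mult_div_cancel)
qed

lemma binom2_nonneg: "0 \<le> binom2 x"
proof -
  have "0 \<le> x * (x - 1)"
    by (cases "x \<le> 0") (auto intro: mult_nonpos_nonpos mult_nonneg_nonneg)
  thus ?thesis using binom2_2[of x] by linarith
qed

lemma binom2_refl: "binom2 (1 - x) = binom2 x"
  using binom2_2[of x] binom2_2[of "1-x"] by (simp add: algebra_simps)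

lemma binom2_2step: "binom2 (x + 2) = binom2 x + 2 * x + 1"
  using binom2_2[of x] binom2_2[of "x+2"] by (simp add: algebra_simps)

context
  fixes q :: complex
  assumes q1: "norm q < 1"
begin

lemma nz: "qpoch (q^2) (q^2) m \<noteq> 0"
  using qpoch_nz[OF q1] .

lemma gbn_out: "k < 0 \<or> k > int n \<Longrightarrow> gbn q n k = 0"
  unfolding gbn_def by (rule gb_out)

lemma SG_ext: "n \<le> m \<Longrightarrow> (\<Sum>k\<le>m. gbn q n (int k) * \<phi> k) = SG q n \<phi>"
  unfolding SG_def
  by (rule sum.mono_neutral_right) (auto simp: gbn_out)

lemma SG_shift: "(\<Sum>k\<le>Suc m. gbn q n (int k - 1) * \<phi> k) = (\<Sum>k\<le>m. gbn q n (int k) * \<phi> (Suc k))"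
  by (subst sum.atMost_Suc_shift) (simp add: gbn_out)

lemma RS: "gbn q (Suc (Suc n)) k = gbn q (Suc n) (k-1) + gbn q (Suc n) k - (1 - (q^2)^Suc n) * gbn q n (k-1)"
proof -
  have a: "gbn q (Suc (Suc n)) k = gbn q (Suc n) (k-1) + (q^2)^nat k * gbn q (Suc n) k"
    unfolding gbn_def by (rule P1[OF nz])
  have b: "(1 - (q^2)^nat k) * gbn q (Suc n) k = (1 - (q^2)^Suc n) * gbn q n (k-1)"
    unfolding gbn_def by (rule I1[OF nz])
  show ?thesis using a b by (simp add: algebra_simps)
qed

lemma SG_rec: "SG q (Suc N) \<phi> = SG q N (\<lambda>k. \<phi> (Suc k)) + SG q N \<phi> - (1 - (q^2)^N) * SG q (N - 1) (\<lambda>k. \<phi> (Suc k))"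
proof (cases N)
  case 0
  have g: "gbn q 0 0 = 1" "gbn q 1 0 = 1" "gbn q 1 1 = 1"
    unfolding gbn_def using gb_0[OF nz, of 0] gb_0[OF nz, of 1] gb_n[OF nz, of 1] by simp_all
  show ?thesis using 0 g by (simp add: SG_def)
next
  case (Suc n)
  have "SG q (Suc N) \<phi> = (\<Sum>k\<le>Suc (Suc n). gbn q (Suc n) (int k - 1) * \<phi> k)
     + (\<Sum>k\<le>Suc (Suc n). gbn q (Suc n) (int k) * \<phi> k)
     - (1 - (q^2)^Suc n) * (\<Sum>k\<le>Suc (Suc n). gbn q n (int k - 1) * \<phi> k)"
    unfolding SG_def Suc RS by (simp add: algebra_simps sum.distrib sum_subtractf sum_distrib_left)
  also have "(\<Sum>k\<le>Suc (Suc n). gbn q (Suc n) (int k - 1) * \<phi> k) = SG q N (\<lambda>k. \<phi> (Suc k))"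
    unfolding SG_shift Suc SG_def ..
  also have "(\<Sum>k\<le>Suc (Suc n). gbn q (Suc n) (int k) * \<phi> k) = SG q N \<phi>"
    unfolding Suc by (rule SG_ext) simp
  also have "(\<Sum>k\<le>Suc (Suc n). gbn q n (int k - 1) * \<phi> k) = SG q (N - 1) (\<lambda>k. \<phi> (Suc k))"
    unfolding SG_shift Suc by (simp only: diff_Suc_1, rule SG_ext) simp
  finally show ?thesis using Suc by simp
qed

lemma SG_neg: "SG q n (\<lambda>k. - \<psi> k) = - SG q n \<psi>"
  unfolding SG_def by (simp add: sum_negf)

lemma D_R: "D q (Suc N) N2 a = - D q N N2 (a-1) + D q N N2 a + (1 - (q^2)^N) * D q (N - 1) N2 (a-1)"
proof -
  have e: "(\<lambda>k. (-1::complex) ^ Suc k * E q N2 (a - int (Suc k))) = (\<lambda>k. - ((-1)^k * E q N2 (a - 1 - int k)))"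
    by (auto simp: algebra_simps)
  show ?thesis unfolding D_def SG_rec e SG_neg by simp
qed

lemma E_0: "E q 0 b = Q q b"
  unfolding E_def SG_def gbn_def using gb_0[OF nz, of 0] by simp

lemma D_N0: "D q N 0 a = E q N a"
  by (simp add: D_def E_0 E_def[of q N])

lemma D_sym: "D q N1 N2 a = D q N2 N1 a"
proof -
  have "D q N1 N2 a = (\<Sum>k1\<le>N1. \<Sum>k2\<le>N2. gbn q N1 (int k1) * gbn q N2 (int k2) * (-1)^k1 * (-1)^k2 * Q q (a - int k1 - int k2))"
    unfolding D_def E_def SG_def by (simp add: sum_distrib_left algebra_simps)
  also have "\<dots> = (\<Sum>k2\<le>N2. \<Sum>k1\<le>N1. gbn q N1 (int k1) * gbn q N2 (int k2) * (-1)^k1 * (-1)^k2 * Q q (a - int k1 - int k2))"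
    by (rule sum.swap)
  also have "\<dots> = D q N2 N1 a"
    unfolding D_def E_def SG_def by (simp add: sum_distrib_left algebra_simps)
  finally show ?thesis .
qed


lemma sum_rev: "(\<Sum>k\<le>n. f k) = (\<Sum>k\<le>n. f (n - k))" for f :: "nat \<Rightarrow> complex"
  by (rule sum.reindex_bij_witness[where i="\<lambda>k. n-k" and j="\<lambda>k. n-k"]) auto

lemma sign_diff: "k \<le> n \<Longrightarrow> (-1::complex)^(n-k) = (-1)^n * (-1)^k"
proof -
  assume "k \<le> n"
  hence "(-1::complex)^n = (-1)^(n-k) * (-1)^k" by (metis le_add_diff_inverse2 power_add)
  hence "(-1::complex)^n * (-1)^k = (-1)^(n-k) * ((-1)^k * (-1)^k)" by simp
  also have "(-1::complex)^k * (-1)^k = 1" by (metis power_add power_minus1_even mult_2 )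
  finally show ?thesis by simp
qed

lemma E_refl: "E q n (int n + 1 - a) = (-1)^n * E q n a"
proof -
  have "E q n (int n + 1 - a) = (\<Sum>k\<le>n. gbn q n (int (n-k)) * ((-1)^(n-k) * Q q (int n + 1 - a - int (n-k))))"
    unfolding E_def SG_def by (rule sum_rev)
  also have "\<dots> = (\<Sum>k\<le>n. (-1)^n * (gbn q n (int k) * ((-1)^k * Q q (a - int k))))"
  proof (rule sum.cong[OF refl])
    fix k assume "k \<in> {..n}"
    hence kn: "k \<le> n" by simp
    have g: "gbn q n (int (n-k)) = gbn q n (int k)"
      unfolding gbn_def using gb_sym[of "q^2" n "int k"] kn by (simp add: of_nat_diff)
    have qq: "Q q (int n + 1 - a - int (n-k)) = Q q (a - int k)"
      unfolding Q_def using binom2_refl[of "a - int k"] kn by (simp add: of_nat_diff algebra_simps)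
    show "gbn q n (int (n-k)) * ((-1)^(n-k) * Q q (int n + 1 - a - int (n-k))) = (-1)^n * (gbn q n (int k) * ((-1)^k * Q q (a - int k)))"
      unfolding g qq sign_diff[OF kn] by (simp add: algebra_simps)
  qed
  also have "\<dots> = (-1)^n * E q n a"
    unfolding E_def SG_def by (simp add: sum_distrib_left)
  finally show ?thesis .
qed

lemma E2:
  assumes an: "a \<le> int n"
  shows "E q (Suc n) a = E q n a - q ^ nat (2 * int n + 1 - 2 * a) * E q n (a + 1)"
proof -
  have P2': "gbn q (Suc n) k = gbn q n k + (q^2)^nat (int n + 1 - k) * gbn q n (k-1)" for k
    unfolding gbn_def by (rule P2[OF nz])
  have "E q (Suc n) a = (\<Sum>k\<le>Suc n. gbn q n (int k) * ((-1)^k * Q q (a - int k)))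
       + (\<Sum>k\<le>Suc n. gbn q n (int k - 1) * ((q^2)^nat (int n + 1 - int k) * (-1)^k * Q q (a - int k)))"
    unfolding E_def SG_def P2' by (simp add: algebra_simps sum.distrib)
  also have "(\<Sum>k\<le>Suc n. gbn q n (int k) * ((-1)^k * Q q (a - int k))) = E q n a"
    unfolding E_def by (rule SG_ext) simp
  also have "(\<Sum>k\<le>Suc n. gbn q n (int k - 1) * ((q^2)^nat (int n + 1 - int k) * (-1)^k * Q q (a - int k)))
      = (\<Sum>k\<le>n. gbn q n (int k) * ((q^2)^nat (int n - int k) * (-1)^Suc k * Q q (a - 1 - int k)))"
    unfolding SG_shift by (simp add: algebra_simps)
  also have "\<dots> = (\<Sum>k\<le>n. - (q ^ nat (2 * int n + 1 - 2 * a) * (gbn q n (int k) * ((-1)^k * Q q (a + 1 - int k)))))"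
  proof (rule sum.cong[OF refl])
    fix k assume "k \<in> {..n}"
    hence kn: "k \<le> n" by simp
    have ex: "2 * nat (int n - int k) + nat (binom2 (a - 1 - int k)) = nat (2 * int n + 1 - 2 * a) + nat (binom2 (a + 1 - int k))"
      using binom2_2step[of "a - 1 - int k"] binom2_nonneg[of "a - 1 - int k"] binom2_nonneg[of "a + 1 - int k"] kn an
      by (simp add: algebra_simps nat_add_distrib[symmetric] nat_mult_distrib)
    have "(q^2)^nat (int n - int k) * Q q (a - 1 - int k) = q ^ nat (2 * int n + 1 - 2 * a) * Q q (a + 1 - int k)"
      unfolding Q_def power_mult[symmetric] power_add[symmetric] ex ..
    thus "gbn q n (int k) * ((q^2)^nat (int n - int k) * (-1)^Suc k * Q q (a - 1 - int k)) =
        - (q ^ nat (2 * int n + 1 - 2 * a) * (gbn q n (int k) * ((-1)^k * Q q (a + 1 - int k))))"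
      by (simp add: algebra_simps)
  qed
  also have "\<dots> = - (q ^ nat (2 * int n + 1 - 2 * a) * E q n (a + 1))"
    unfolding E_def SG_def sum_distrib_left by (rule sum_negf)
  finally show ?thesis by simp
qed


lemma E_base: "E q (2*m) (int m) = q^(m^2) * qpoch q (q^2) m"
proof (induction m)
  case 0
  show ?case using E_0 by (simp add: Q_def binom2_def)
next
  case (Suc m)
  have e1: "nat (2 * int (2*m) + 1 - 2 * int m) = 2*m+1" by simp
  have e2: "nat (2 * int (Suc (2*m)) + 1 - 2 * (int m + 1)) = 2*m+1" by simp
  have h1: "E q (Suc (2*m)) (int m) = E q (2*m) (int m) - q^(2*m+1) * E q (2*m) (int m + 1)"
    using E2[of "int m" "2*m"] e1 by simp
  have h2: "E q (2*m) (int m + 1) = E q (2*m) (int m)"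
    using E_refl[of "2*m" "int m"] by (simp add: algebra_simps)
  have h3: "E q (Suc (Suc (2*m))) (int m + 1) = E q (Suc (2*m)) (int m + 1) - q^(2*m+1) * E q (Suc (2*m)) (int m + 1 + 1)"
    using E2[of "int m + 1" "Suc (2*m)"] e2 by simp
  have "E q (Suc (2*m)) (int m + 1) = - E q (Suc (2*m)) (int m + 1)"
    using E_refl[of "Suc (2*m)" "int m + 1"] by (simp add: algebra_simps)
  hence h4: "E q (Suc (2*m)) (int m + 1) = 0" by simp
  have h5: "E q (Suc (2*m)) (int m + 1 + 1) = - E q (Suc (2*m)) (int m)"
    using E_refl[of "Suc (2*m)" "int m"] by (simp add: algebra_simps)
  have h1': "E q (Suc (2*m)) (int m) = (1 - q^(2*m+1)) * E q (2*m) (int m)"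
    using h1 h2 by (simp add: algebra_simps)
  have ii: "2 * Suc m = Suc (Suc (2*m))" "int (Suc m) = int m + 1" by simp_all
  have "E q (2 * Suc m) (int (Suc m)) = q^(2*m+1) * (1 - q^(2*m+1)) * E q (2*m) (int m)"
    unfolding ii h3 h4 h5 h1' by simp
  also have "\<dots> = q^(Suc m ^ 2) * qpoch q (q^2) (Suc m)"
    unfolding Suc.IH qpoch_Suc by (simp add: algebra_simps power2_eq_square power_add power_mult[symmetric] mult_2_right)
  finally show ?case .
qed


lemma D_R2: "D q N1 (Suc N) a = - D q N1 N (a-1) + D q N1 N a + (1 - (q^2)^N) * D q N1 (N - 1) (a-1)"
  using D_R[of N N1 a] D_sym by metis

definition Af :: "nat \<Rightarrow> nat \<Rightarrow> complex" where
  "Af N1 N2 = (-1)^N1 * q ^ nat (((int N1 - int N2) div 2)^2) * qpoch q (q^2) ((N1 + N2) div 2)"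

lemma alg: "u1 * y = u0 * x \<Longrightarrow> u0 * z = u1 * x \<Longrightarrow>
   u0 * (P*(1-x)) = -(u1 * (P*(1-x))) + (1 - y) * (u1 * P) + (1 - z) * (u0 * P)" for u0 u1 x y z P :: complex
  by algebra

lemma A_main: "even (N1 + N2) \<Longrightarrow> D q N1 N2 (int ((N1 + N2) div 2)) = Af N1 N2"
proof (induction N2 arbitrary: N1 rule: less_induct)
  case (less N2)
  show ?case
  proof (cases N2)
    case 0
    then obtain m where m: "N1 = 2*m" using less.prems by auto
    have "nat ((int (2*m) div 2)^2) = m^2" by (simp add: nat_power_eq)
    thus ?thesis unfolding 0 D_N0 Af_def m using E_base[of m] by simp
  next
    case (Suc n)
    define m where "m = (N1 + Suc n) div 2"
    define sd where "sd = (int N1 - int (Suc n)) div 2"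
    define a where "a = int ((N1 + N2) div 2)"
    have m2: "N1 + Suc n = 2*m" using less.prems Suc unfolding m_def by auto
    hence s2: "int N1 - int (Suc n) = 2 * sd" unfolding sd_def by presburger
    have m1: "m \<ge> 1" using m2 by simp
    have am: "a = int m" unfolding a_def m_def Suc ..
    have rel: "D q N1 N2 a = D q (Suc N1) n a + (1 - (q^2)^n) * D q N1 (n-1) (a-1) - (1 - (q^2)^N1) * D q (N1-1) n (a-1)"
      unfolding Suc D_R2 D_R by simp
    define P where "P = qpoch q (q^2) (m-1)"
    define x where "x = q * (q^2)^(m-1)"
    have Pm: "qpoch q (q^2) m = P * (1 - x)"
      unfolding P_def x_def using qpoch_Suc[of q "q^2" "m-1"] m1 by simp
    define e0 where "e0 = nat (sd^2)"
    define e1 where "e1 = nat ((sd+1)^2)"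
    have T1: "D q (Suc N1) n a = (-1)^Suc N1 * q^e1 * qpoch q (q^2) m"
    proof -
      have d: "D q (Suc N1) n a = Af (Suc N1) n"
        using less.IH[of n "Suc N1"] Suc less.prems m2 am by (simp add: m_def)
      have f: "(int (Suc N1) - int n) div 2 = sd + 1" using s2 by simp
      have "Af (Suc N1) n = (-1)^Suc N1 * q^e1 * qpoch q (q^2) m"
        unfolding Af_def e1_def m_def f by simp
      thus ?thesis using d by simp
    qed
    have T2: "(1 - (q^2)^n) * D q N1 (n-1) (a-1) = (1 - (q^2)^n) * ((-1)^N1 * q^e1 * P)"
    proof (cases n)
      case 0 then show ?thesis by simp
    next
      case (Suc n')
      have d: "D q N1 (n-1) (a-1) = Af N1 (n-1)"
        using less.IH[of "n-1" N1] \<open>N2 = Suc n\<close> less.prems m2 am Suc by (simp add: m_def)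
      have f: "(int N1 - int (n-1)) div 2 = sd + 1" using s2 Suc by simp
      have f2: "(N1 + (n-1)) div 2 = m - 1" using m2 Suc by simp
      have "Af N1 (n-1) = (-1)^N1 * q^e1 * P"
        unfolding Af_def e1_def P_def f f2 by simp
      thus ?thesis using d by simp
    qed
    have T3: "(1 - (q^2)^N1) * D q (N1-1) n (a-1) = (1 - (q^2)^N1) * (- ((-1)^N1 * q^e0 * P))"
    proof (cases N1)
      case 0 then show ?thesis by simp
    next
      case (Suc n')
      have d: "D q (N1-1) n (a-1) = Af (N1-1) n"
        using less.IH[of n "N1-1"] \<open>N2 = Suc n\<close> less.prems m2 am Suc by (simp add: m_def)
      have f: "(int (N1-1) - int n) div 2 = sd" using s2 Suc by simp
      have f2: "(N1 - 1 + n) div 2 = m - 1" using m2 Suc by simp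
      have "Af (N1-1) n = - ((-1)^N1 * q^e0 * P)"
        unfolding Af_def e0_def P_def f f2 using Suc by simp
      thus ?thesis using d by simp
    qed
    have goal: "Af N1 N2 = (-1)^N1 * q^e0 * qpoch q (q^2) m"
      unfolding Af_def e0_def m_def sd_def Suc ..
    have ie: "int e0 = sd^2" "int e1 = (sd+1)^2" unfolding e0_def e1_def by simp_all
    have im: "int (m - 1) = int m - 1" using m1 by simp
    have i1: "int N1 = int n + 1 + 2 * sd" using s2 by simp
    have i2: "int N1 + int n + 1 = 2 * int m" using arg_cong[OF m2, of int] by simp
    have x1: "e1 + 2*n = e0 + (1 + 2*(m-1))"
    proof -
      have "int (e1 + 2*n) = int (e0 + (1 + 2*(m-1)))"
        unfolding of_nat_add of_nat_mult ie im using i1 i2 by (simp add: power2_eq_square algebra_simps)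
      thus ?thesis by (simp only: of_nat_eq_iff)
    qed
    have x2: "e0 + 2*N1 = e1 + (1 + 2*(m-1))"
    proof -
      have "int (e0 + 2*N1) = int (e1 + (1 + 2*(m-1)))"
        unfolding of_nat_add of_nat_mult ie im using i1 i2 by (simp add: power2_eq_square algebra_simps)
      thus ?thesis by (simp only: of_nat_eq_iff)
    qed
    have y1: "q^e1 * (q^2)^n = q^e0 * x"
      unfolding x_def power_mult[symmetric] power_add[symmetric] mult.assoc[symmetric] x1
      by (simp add: power_add)
    have y2: "q^e0 * (q^2)^N1 = q^e1 * x"
      unfolding x_def power_mult[symmetric] power_add[symmetric] x2
      by (simp add: power_add)
    have "D q N1 N2 a = (-1)^N1 * (- (q^e1 * (P*(1-x))) + (1 - (q^2)^n) * (q^e1 * P) + (1 - (q^2)^N1) * (q^e0 * P))"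
      unfolding rel T1 T2 T3 Pm by (simp add: algebra_simps)
    also have "\<dots> = (-1)^N1 * (q^e0 * (P*(1-x)))"
      using alg[OF y1 y2, of P] by simp
    also have "\<dots> = Af N1 N2" unfolding goal Pm by (simp add: algebra_simps)
    finally show ?thesis unfolding a_def .
  qed
qed


lemma D_final: "(-1)^(L+M) * D q (2*L) (2*M) (int (L+M)) = (-1) ^ (L + M) * q ^ nat ((int L - int M)^2) * qpoch q (q^2) (L + M)"
proof -
  have "D q (2*L) (2*M) (int ((2*L + 2*M) div 2)) = Af (2*L) (2*M)"
    by (rule A_main) simp
  moreover have "(2*L + 2*M) div 2 = L + M" by simp
  moreover have "(int (2*L) - int (2*M)) div 2 = int L - int M" by simp
  ultimately show ?thesis unfolding Af_def by simp
qed

end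


lemma sgn_abs: "(-1::complex)^nat \<bar>int a - int b\<bar> = (-1)^a * (-1)^b"
proof -
  have sd: "(-1::complex)^(n-k) = (-1)^n * (-1)^k" if "k \<le> n" for n k
  proof -
    have "(-1::complex)^n = (-1)^(n-k) * (-1)^k" using that by (metis le_add_diff_inverse2 power_add)
    hence "(-1::complex)^n * (-1)^k = (-1)^(n-k) * ((-1)^k * (-1)^k)" by simp
    also have "(-1::complex)^k * (-1)^k = 1" by (metis power_add power_minus1_even mult_2)
    finally show ?thesis by simp
  qed
  show ?thesis
  proof (cases "b \<le> a")
    case True
    hence h: "nat \<bar>int a - int b\<bar> = a - b" by simp
    show ?thesis unfolding h by (rule sd[OF True])
  next
    case False
    hence h: "nat \<bar>int a - int b\<bar> = b - a" by simp
    have "(-1::complex)^(b-a) = (-1)^b * (-1)^a" using False by (intro sd) simp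
    thus ?thesis unfolding h by (simp add: mult.commute)
  qed
qed

theorem mainTheorem6:
  fixes q :: complex and L M :: nat
  assumes "norm q < 1"
  shows "(\<Sum>\<^sub>\<infinity>(i, j) \<in> (UNIV :: (int \<times> int) set).
            (-1) ^ nat \<bar>i + j\<bar> * q ^ nat (binom2 (i + j))
            * gauss_binom (q^2) (2 * int L) (int L - i)
            * gauss_binom (q^2) (2 * int M) (int M - j))
         = (-1) ^ (L + M) * q ^ nat ((int L - int M)^2) * qpoch q (q^2) (L + M)"
proof -
  define f where "f = (\<lambda>(i, j). (-1) ^ nat \<bar>i + j\<bar> * q ^ nat (binom2 (i + j))
            * gauss_binom (q^2) (2 * int L) (int L - i)
            * gauss_binom (q^2) (2 * int M) (int M - j))"
  define S where "S = {-int L..int L} \<times> {-int M..int M}"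
  have "(\<Sum>\<^sub>\<infinity>x\<in>UNIV. f x) = (\<Sum>\<^sub>\<infinity>x\<in>S. f x)"
  proof (rule infsum_cong_neutral)
    fix x assume "x \<in> UNIV - S"
    obtain i j where x: "x = (i, j)" by (cases x)
    have "i \<notin> {-int L..int L} \<or> j \<notin> {-int M..int M}"
      using \<open>x \<in> UNIV - S\<close> unfolding S_def x by auto
    thus "f x = 0" unfolding f_def gauss_binom_def x by auto
  qed auto
  also have "\<dots> = sum f S" unfolding S_def by simp
  also have "\<dots> = (\<Sum>i\<in>{-int L..int L}. \<Sum>j\<in>{-int M..int M}. f (i, j))"
    unfolding S_def by (simp add: sum.cartesian_product)
  also have "\<dots> = (\<Sum>k1\<le>2*L. \<Sum>j\<in>{-int M..int M}. f (int L - int k1, j))"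
    by (rule sum.reindex_bij_witness[where i="\<lambda>k. int L - int k" and j="\<lambda>i. nat (int L - i)"]) auto
  also have "\<dots> = (\<Sum>k1\<le>2*L. \<Sum>k2\<le>2*M. f (int L - int k1, int M - int k2))"
    by (intro sum.cong refl, rule sum.reindex_bij_witness[where i="\<lambda>k. int M - int k" and j="\<lambda>i. nat (int M - i)"]) auto
  also have "\<dots> = (-1)^(L+M) * D q (2*L) (2*M) (int (L+M))"
    unfolding D_def E_def SG_def gbn_def sum_distrib_left
  proof (intro sum.cong refl)
    fix k1 k2
    have e: "int L - int k1 + (int M - int k2) = int (L+M) - int (k1+k2)" by simp
    have e2: "int (L + M) - int k1 - int k2 = int (L+M) - int (k1+k2)" by simp
    show "f (int L - int k1, int M - int k2) = (-1) ^ (L + M) * (gauss_binom (q\<^sup>2) (int (2 * L)) (int k1) *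
             ((-1) ^ k1 * (gauss_binom (q\<^sup>2) (int (2 * M)) (int k2) * ((-1) ^ k2 * Q q (int (L + M) - int k1 - int k2)))))"
      unfolding f_def Q_def prod.case e e2 sgn_abs by (simp add: algebra_simps power_add)
  qed
  also have "\<dots> = (-1) ^ (L + M) * q ^ nat ((int L - int M)^2) * qpoch q (q^2) (L + M)"
    by (rule D_final[OF assms])
  finally show ?thesis unfolding f_def .
qed

end
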